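(* Let $n>1$ and $m$ be integers with $0<m<n$. Then the following maps are well defined, order-preserving and bijective: $$\mathcal{F}^{\leq\frac12}(n,m)\to\mathcal{F}^m_{n-m},\ \tfrac hk\mapsto\tfrac{h}{k-h};\qquad \mathcal{F}^m_{n-m}\to\mathcal{F}^{\leq\frac12}(n,m),\ \tfrac hk\mapsto\tfrac{h}{k+h};$$ $$\mathcal{F}^{\geq\frac12}(n,m)\to\mathcal{G}_m^{2m-n},\ \tfrac hk\mapsto\tfrac{2h-k}{h};\qquad \mathcal{G}_m^{2m-n}\to\mathcal{F}^{\geq\frac12}(n,m),\ \tfrac hk\mapsto\tfrac{k}{2k-h}.$$ Moreover, the following maps are well defined, order-reversing and bijective: $$\mathcal{F}^{\leq\frac12}(n,m)\to\mathcal{G}^{n-2m}_{n-m},\ \tfrac hk\mapsto\tfrac{k-2h}{k-h};\qquad \mathcal{G}^{n-2m}_{n-m}\to\mathcal{F}^{\leq\frac12}(n,m),\ \tfrac hk\mapsto\tfrac{k-h}{2k-h};$$ $$\mathcal{F}^{\geq\frac12}(n,m)\to\mathcal{F}^{n-m}_m,\ \tfrac hk\mapsto\tfrac{k-h}{h};\qquad \mathcal{F}^{n-m}_m\to\mathcal{F}^{\geq\frac12}(n,m),\ \tfrac hk\mapsto\tfrac{k}{k+h}.$$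
   Context: For an integer $N\geq 1$, the Farey sequence $\mathcal{F}_N$ is the ascending sequence of irreducible fractions $\tfrac hk$ (with $h\ge0$, $k\ge1$, $\gcd(h,k)=1$) such that $\tfrac01\leq\tfrac hk\leq\tfrac11$ and $1\leq k\leq N$. For integers $N\ge1$ and $M$, let $\mathcal{F}_N^M:=\left(\tfrac hk\in\mathcal{F}_N:\ h\leq M\right)$ and $\mathcal{G}_N^M:=\left(\tfrac hk\in\mathcal{F}_N:\ k-h\leq N-M\right)$. For $0<m<n$, let $\mathcal{F}(n,m):=\left(\tfrac hk\in\mathcal{F}_n:\ h\leq m,\ k-h\leq n-m\right)$ (this is the sequence of reduced fractions $\rho(b\wedge a)/\rho(b)$, over nonzero elements $b$ of the Boolean lattice of rank $n$, for a fixed element $a$ of rank $m$, where $\rho$ is rank). Its left halfsequence is $\mathcal{F}^{\leq\frac12}(n,m):=\left(\tfrac hk\in\mathcal{F}(n,m):\ \tfrac hk\leq\tfrac12\right)$ and its right halfsequence is $\mathcal{F}^{\geq\frac12}(n,m):=\left(\tfrac hk\in\mathcal{F}(n,m):\ \tfrac hk\geq\tfrac12\right)$. All sequences are ordered as rational numbers and fractions are written in lowest terms. *)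

theory Defs
  imports Main "HOL.Rat"
begin

text \<open>Fractions are rationals; the reduced form h/k (k > 0) of x is quotient_of x.\<close>

definition Farey :: "int \<Rightarrow> rat set" where
  "Farey N = {x. \<exists>h k. quotient_of x = (h, k) \<and> 0 \<le> h \<and> h \<le> k \<and> 1 \<le> k \<and> k \<le> N}"

definition FareyF :: "int \<Rightarrow> int \<Rightarrow> rat set" where
  "FareyF N M = {x \<in> Farey N. fst (quotient_of x) \<le> M}"

definition FareyG :: "int \<Rightarrow> int \<Rightarrow> rat set" where
  "FareyG N M = {x \<in> Farey N. snd (quotient_of x) - fst (quotient_of x) \<le> N - M}"

definition FareyB :: "int \<Rightarrow> int \<Rightarrow> rat set" where
  "FareyB n m = {x \<in> Farey n. fst (quotient_of x) \<le> m \<and>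
                   snd (quotient_of x) - fst (quotient_of x) \<le> n - m}"

definition FareyB_left :: "int \<Rightarrow> int \<Rightarrow> rat set" where
  "FareyB_left n m = {x \<in> FareyB n m. x \<le> 1/2}"

definition FareyB_right :: "int \<Rightarrow> int \<Rightarrow> rat set" where
  "FareyB_right n m = {x \<in> FareyB n m. x \<ge> 1/2}"

definition frac_map :: "(int \<Rightarrow> int \<Rightarrow> int) \<Rightarrow> (int \<Rightarrow> int \<Rightarrow> int) \<Rightarrow> rat \<Rightarrow> rat" where
  "frac_map p q x = (case quotient_of x of (h, k) \<Rightarrow> of_int (p h k) / of_int (q h k))"

definition order_reversing_on :: "rat set \<Rightarrow> (rat \<Rightarrow> rat) \<Rightarrow> bool" where
  "order_reversing_on A f \<longleftrightarrow> (\<forall>x\<in>A. \<forall>y\<in>A. x < y \<longrightarrow> f y < f x)"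

end

theory Submission imports Defs begin

lemma quot_eq: "coprime a b \<Longrightarrow> b > 0 \<Longrightarrow> quotient_of (of_int a / of_int b) = (a, b)"
  by (metis Fract_of_int_quotient normalize_stable quotient_of_Fract)

lemma rat_lt: "(b::int) > 0 \<Longrightarrow> d > 0 \<Longrightarrow> (of_int a / of_int b < (of_int c / of_int d :: rat)) \<longleftrightarrow> a * d < c * b"
  by (simp add: divide_simps flip: of_int_mult) 

lemma coprime_lin: "coprime (h::int) k \<Longrightarrow> h = a*p+b*q \<Longrightarrow> k = c*p+d*q \<Longrightarrow> coprime p q"
  by (rule coprimeI) (metis coprime_common_divisor dvd_add dvd_mult)

lemma main:
  fixes p q p' q' :: "int \<Rightarrow> int \<Rightarrow> int" and R S :: "int \<times> int \<Rightarrow> bool"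
  assumes memA: "\<And>x. x \<in> A \<longleftrightarrow> R (quotient_of x)"
    and memB: "\<And>x. x \<in> B \<longleftrightarrow> S (quotient_of x)"
    and f1: "\<And>h k. R (h,k) \<Longrightarrow> k > 0 \<Longrightarrow> coprime h k \<Longrightarrow>
        q h k > 0 \<and> coprime (p h k) (q h k) \<and> S (p h k, q h k) \<and> p' (p h k) (q h k) = h \<and> q' (p h k) (q h k) = k"
    and f2: "\<And>h k. S (h,k) \<Longrightarrow> k > 0 \<Longrightarrow> coprime h k \<Longrightarrow>
        q' h k > 0 \<and> coprime (p' h k) (q' h k) \<and> R (p' h k, q' h k) \<and> p (p' h k) (q' h k) = h \<and> q (p' h k) (q' h k) = k"
  shows "bij_betw (frac_map p q) A B"
proof (rule bij_betw_byWitness[where f'="frac_map p' q'"])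
  show "\<forall>a\<in>A. frac_map p' q' (frac_map p q a) = a"
  proof
    fix x assume "x \<in> A"
    obtain h k where hk: "quotient_of x = (h,k)" by force
    have k: "k > 0" "coprime h k" using hk quotient_of_denom_pos quotient_of_coprime by auto
    have R: "R (h,k)" using \<open>x\<in>A\<close> memA hk by auto
    have "frac_map p q x = of_int (p h k) / of_int (q h k)" by (simp add: frac_map_def hk)
    then show "frac_map p' q' (frac_map p q x) = x" using f1[OF R k] quot_eq[of "p h k" "q h k"]
      by (simp add: frac_map_def quotient_of_div[OF hk])
  qed
  show "\<forall>a\<in>B. frac_map p q (frac_map p' q' a) = a"
  proof
    fix x assume "x \<in> B"
    obtain h k where hk: "quotient_of x = (h,k)" by force
    have k: "k > 0" "coprime h k" using hk quotient_of_denom_pos quotient_of_coprime by auto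
    have R: "S (h,k)" using \<open>x\<in>B\<close> memB hk by auto
    have "frac_map p' q' x = of_int (p' h k) / of_int (q' h k)" by (simp add: frac_map_def hk)
    then show "frac_map p q (frac_map p' q' x) = x" using f2[OF R k] quot_eq[of "p' h k" "q' h k"]
      by (simp add: frac_map_def quotient_of_div[OF hk])
  qed
  show "frac_map p q ` A \<subseteq> B"
  proof
    fix y assume "y \<in> frac_map p q ` A"
    then obtain x where "x \<in> A" and y: "y = frac_map p q x" by auto
    obtain h k where hk: "quotient_of x = (h,k)" by force
    have k: "k > 0" "coprime h k" using hk quotient_of_denom_pos quotient_of_coprime by auto
    have R: "R (h,k)" using \<open>x\<in>A\<close> memA hk by auto
    have "y = of_int (p h k) / of_int (q h k)" by (simp add: y frac_map_def hk)
    then show "y \<in> B" using f1[OF R k] quot_eq[of "p h k" "q h k"] memB by simp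
  qed
  show "frac_map p' q' ` B \<subseteq> A"
  proof
    fix y assume "y \<in> frac_map p' q' ` B"
    then obtain x where "x \<in> B" and y: "y = frac_map p' q' x" by auto
    obtain h k where hk: "quotient_of x = (h,k)" by force
    have k: "k > 0" "coprime h k" using hk quotient_of_denom_pos quotient_of_coprime by auto
    have R: "S (h,k)" using \<open>x\<in>B\<close> memB hk by auto
    have "y = of_int (p' h k) / of_int (q' h k)" by (simp add: y frac_map_def hk)
    then show "y \<in> A" using f2[OF R k] quot_eq[of "p' h k" "q' h k"] memA by simp
  qed
qed

lemma mono_gen:
  fixes p q :: "int \<Rightarrow> int \<Rightarrow> int"
  assumes memA: "\<And>x. x \<in> A \<longleftrightarrow> R (quotient_of x)"
    and pos: "\<And>h k. R (h,k) \<Longrightarrow> k > 0 \<Longrightarrow> q h k > 0"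
    and det: "\<And>h k h' k'. p h k * q h' k' - p h' k' * q h k = c * (h*k' - h'*k)"
    and x: "x \<in> A" and y: "y \<in> A" and xy: "x < y"
  shows "(c > 0 \<longrightarrow> frac_map p q x < frac_map p q y) \<and> (c < 0 \<longrightarrow> frac_map p q y < frac_map p q x)"
proof -
  obtain h k where hk: "quotient_of x = (h,k)" by force
  obtain h' k' where hk': "quotient_of y = (h',k')" by force
  have k: "k > 0" "k' > 0" using hk hk' quotient_of_denom_pos by auto
  have q: "q h k > 0" "q h' k' > 0" using pos k memA x y hk hk' by auto
  have "h * k' < h' * k" using xy k rat_lt[of k k' h h'] quotient_of_div[OF hk] quotient_of_div[OF hk'] by simp
  hence d: "h*k' - h'*k < 0" by simp
  have fx: "frac_map p q x = of_int (p h k) / of_int (q h k)" by (simp add: frac_map_def hk)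
  have fy: "frac_map p q y = of_int (p h' k') / of_int (q h' k')" by (simp add: frac_map_def hk')
  show ?thesis
  proof (intro conjI impI)
    assume "c > 0"
    hence "c * (h*k' - h'*k) < 0" using d mult_pos_neg by blast
    thus "frac_map p q x < frac_map p q y" unfolding fx fy using rat_lt[OF q] det[of h k h' k'] by simp
  next
    assume "c < 0"
    hence "c * (h*k' - h'*k) > 0" using d mult_neg_neg by blast
    thus "frac_map p q y < frac_map p q x" unfolding fx fy using rat_lt[OF q(2) q(1)] det[of h k h' k'] by simp
  qed
qed

lemma rat_le: "(b::int) > 0 \<Longrightarrow> d > 0 \<Longrightarrow> (of_int a / of_int b \<le> (of_int c / of_int d :: rat)) \<longleftrightarrow> a * d \<le> c * b"
  by (simp add: divide_simps flip: of_int_mult)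

lemma half_le: "quotient_of x = (h,k) \<Longrightarrow> x \<le> 1/2 \<longleftrightarrow> 2*h \<le> k"
proof -
  assume hk: "quotient_of x = (h,k)"
  have "k > 0" using hk quotient_of_denom_pos by auto
  have "(1::rat)/2 = of_int 1 / of_int 2" by simp
  then show ?thesis using rat_le[of k 2 h 1] rat_le[of 2 k 1 h] \<open>k>0\<close> quotient_of_div[OF hk] by (auto simp: mult.commute)
qed

lemma half_ge: "quotient_of x = (h,k) \<Longrightarrow> x \<ge> 1/2 \<longleftrightarrow> k \<le> 2*h"
proof -
  assume hk: "quotient_of x = (h,k)"
  have "k > 0" using hk quotient_of_denom_pos by auto
  have "(1::rat)/2 = of_int 1 / of_int 2" by simp
  then show ?thesis using rat_le[of k 2 h 1] rat_le[of 2 k 1 h] \<open>k>0\<close> quotient_of_div[OF hk] by (auto simp: mult.commute)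
qed

lemma mem_L: "x \<in> FareyB_left n m \<longleftrightarrow> (\<lambda>(h,k). 0\<le>h \<and> h\<le>k \<and> 1\<le>k \<and> k\<le>n \<and> h\<le>m \<and> k-h\<le>n-m \<and> 2*h\<le>k) (quotient_of x)"
proof -
  obtain h k where hk: "quotient_of x = (h,k)" by force
  show ?thesis using half_le[OF hk] by (auto simp: FareyB_left_def FareyB_def Farey_def hk)
qed

lemma mem_R: "x \<in> FareyB_right n m \<longleftrightarrow> (\<lambda>(h,k). 0\<le>h \<and> h\<le>k \<and> 1\<le>k \<and> k\<le>n \<and> h\<le>m \<and> k-h\<le>n-m \<and> k\<le>2*h) (quotient_of x)"
proof -
  obtain h k where hk: "quotient_of x = (h,k)" by force
  show ?thesis using half_ge[OF hk] by (auto simp: FareyB_right_def FareyB_def Farey_def hk)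
qed

lemma mem_F: "x \<in> FareyF N M \<longleftrightarrow> (\<lambda>(h,k). 0\<le>h \<and> h\<le>k \<and> 1\<le>k \<and> k\<le>N \<and> h\<le>M) (quotient_of x)"
  by (cases "quotient_of x") (auto simp: FareyF_def Farey_def)

lemma mem_G: "x \<in> FareyG N M \<longleftrightarrow> (\<lambda>(h,k). 0\<le>h \<and> h\<le>k \<and> 1\<le>k \<and> k\<le>N \<and> k-h\<le>N-M) (quotient_of x)"
  by (cases "quotient_of x") (auto simp: FareyG_def Farey_def)

lemma b1: "bij_betw (frac_map (\<lambda>h k. h) (\<lambda>h k. k - h)) (FareyB_left n m) (FareyF (n - m) m)"
  apply (rule main[where p'="\<lambda>h k. h" and q'="\<lambda>h k. k + h", OF mem_L mem_F])
  subgoal for h k using coprime_lin[of h k 1 h 0 "k-h" 1 1] by auto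
  subgoal for h k using coprime_lin[of h k 1 h 0 "k+h" "-1" 1] by auto
  done

lemma b2: "bij_betw (frac_map (\<lambda>h k. h) (\<lambda>h k. k + h)) (FareyF (n - m) m) (FareyB_left n m)"
  apply (rule main[where p'="\<lambda>h k. h" and q'="\<lambda>h k. k - h", OF mem_F mem_L])
  subgoal for h k using coprime_lin[of h k 1 h 0 "k+h" "-1" 1] by auto
  subgoal for h k using coprime_lin[of h k 1 h 0 "k-h" 1 1] by auto
  done

lemma b3: "bij_betw (frac_map (\<lambda>h k. 2*h - k) (\<lambda>h k. h)) (FareyB_right n m) (FareyG m (2*m - n))"
  apply (rule main[where p'="\<lambda>h k. k" and q'="\<lambda>h k. 2*k - h", OF mem_R mem_G])
  subgoal for h k using coprime_lin[of h k 0 "2*h-k" 1 h "-1" 2] by auto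
  subgoal for h k using coprime_lin[of h k 2 k "-1" "2*k-h" 1 0] by auto
  done

lemma b4: "bij_betw (frac_map (\<lambda>h k. k) (\<lambda>h k. 2*k - h)) (FareyG m (2*m - n)) (FareyB_right n m)"
  apply (rule main[where p'="\<lambda>h k. 2*h - k" and q'="\<lambda>h k. h", OF mem_G mem_R])
  subgoal for h k using coprime_lin[of h k 2 k "-1" "2*k-h" 1 0] by auto
  subgoal for h k using coprime_lin[of h k 0 "2*h-k" 1 h "-1" 2] by auto
  done

lemma b5: "bij_betw (frac_map (\<lambda>h k. k - 2*h) (\<lambda>h k. k - h)) (FareyB_left n m) (FareyG (n - m) (n - 2*m))"
  apply (rule main[where p'="\<lambda>h k. k - h" and q'="\<lambda>h k. 2*k - h", OF mem_L mem_G])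
  subgoal for h k using coprime_lin[of h k "-1" "k-2*h" 1 "k-h" "-1" 2] by auto
  subgoal for h k using coprime_lin[of h k "-2" "k-h" 1 "2*k-h" "-1" 1] by auto
  done

lemma b6: "bij_betw (frac_map (\<lambda>h k. k - h) (\<lambda>h k. 2*k - h)) (FareyG (n - m) (n - 2*m)) (FareyB_left n m)"
  apply (rule main[where p'="\<lambda>h k. k - 2*h" and q'="\<lambda>h k. k - h", OF mem_G mem_L])
  subgoal for h k using coprime_lin[of h k "-2" "k-h" 1 "2*k-h" "-1" 1] by auto
  subgoal for h k using coprime_lin[of h k "-1" "k-2*h" 1 "k-h" "-1" 2] by auto
  done

lemma b7: "bij_betw (frac_map (\<lambda>h k. k - h) (\<lambda>h k. h)) (FareyB_right n m) (FareyF m (n - m))"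
  apply (rule main[where p'="\<lambda>h k. k" and q'="\<lambda>h k. k + h", OF mem_R mem_F])
  subgoal for h k using coprime_lin[of h k 0 "k-h" 1 h 1 1] by auto
  subgoal for h k using coprime_lin[of h k "-1" k 1 "k+h" 1 0] by auto
  done

lemma b8: "bij_betw (frac_map (\<lambda>h k. k) (\<lambda>h k. k + h)) (FareyF m (n - m)) (FareyB_right n m)"
  apply (rule main[where p'="\<lambda>h k. k - h" and q'="\<lambda>h k. h", OF mem_F mem_R])
  subgoal for h k using coprime_lin[of h k "-1" k 1 "k+h" 1 0] by auto
  subgoal for h k using coprime_lin[of h k 0 "k-h" 1 h 1 1] by auto
  done

lemma smono_gen:
  fixes p q :: "int \<Rightarrow> int \<Rightarrow> int"
  assumes memA: "\<And>x. x \<in> A \<longleftrightarrow> R (quotient_of x)"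
    and pos: "\<And>h k. R (h,k) \<Longrightarrow> k > 0 \<Longrightarrow> q h k > 0"
    and det: "\<And>h k h' k'. p h k * q h' k' - p h' k' * q h k = h*k' - h'*k"
  shows "strict_mono_on A (frac_map p q)"
  unfolding strict_mono_on_def
  using mono_gen[OF memA pos, where c=1] det by auto

lemma rev_gen:
  fixes p q :: "int \<Rightarrow> int \<Rightarrow> int"
  assumes memA: "\<And>x. x \<in> A \<longleftrightarrow> R (quotient_of x)"
    and pos: "\<And>h k. R (h,k) \<Longrightarrow> k > 0 \<Longrightarrow> q h k > 0"
    and det: "\<And>h k h' k'. p h k * q h' k' - p h' k' * q h k = - (h*k' - h'*k)"
  shows "order_reversing_on A (frac_map p q)"
  unfolding order_reversing_on_def
  using mono_gen[OF memA pos, where c="-1"] det by auto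

theorem theorem2:
  fixes n m :: int
  assumes "n > 1" and "0 < m" and "m < n"
  shows
"(bij_betw (frac_map (\<lambda>h k. h) (\<lambda>h k. k - h)) (FareyB_left n m) (FareyF (n - m) m) \<and>
    strict_mono_on (FareyB_left n m) (frac_map (\<lambda>h k. h) (\<lambda>h k. k - h)))
\<and> (bij_betw (frac_map (\<lambda>h k. h) (\<lambda>h k. k + h)) (FareyF (n - m) m) (FareyB_left n m) \<and>
    strict_mono_on (FareyF (n - m) m) (frac_map (\<lambda>h k. h) (\<lambda>h k. k + h)))
\<and> (bij_betw (frac_map (\<lambda>h k. 2*h - k) (\<lambda>h k. h)) (FareyB_right n m) (FareyG m (2*m - n)) \<and>
    strict_mono_on (FareyB_right n m) (frac_map (\<lambda>h k. 2*h - k) (\<lambda>h k. h)))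
\<and> (bij_betw (frac_map (\<lambda>h k. k) (\<lambda>h k. 2*k - h)) (FareyG m (2*m - n)) (FareyB_right n m) \<and>
    strict_mono_on (FareyG m (2*m - n)) (frac_map (\<lambda>h k. k) (\<lambda>h k. 2*k - h)))
\<and> (bij_betw (frac_map (\<lambda>h k. k - 2*h) (\<lambda>h k. k - h)) (FareyB_left n m) (FareyG (n - m) (n - 2*m)) \<and>
    order_reversing_on (FareyB_left n m) (frac_map (\<lambda>h k. k - 2*h) (\<lambda>h k. k - h)))
\<and> (bij_betw (frac_map (\<lambda>h k. k - h) (\<lambda>h k. 2*k - h)) (FareyG (n - m) (n - 2*m)) (FareyB_left n m) \<and>
    order_reversing_on (FareyG (n - m) (n - 2*m)) (frac_map (\<lambda>h k. k - h) (\<lambda>h k. 2*k - h)))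
\<and> (bij_betw (frac_map (\<lambda>h k. k - h) (\<lambda>h k. h)) (FareyB_right n m) (FareyF m (n - m)) \<and>
    order_reversing_on (FareyB_right n m) (frac_map (\<lambda>h k. k - h) (\<lambda>h k. h)))
\<and> (bij_betw (frac_map (\<lambda>h k. k) (\<lambda>h k. k + h)) (FareyF m (n - m)) (FareyB_right n m) \<and>
    order_reversing_on (FareyF m (n - m)) (frac_map (\<lambda>h k. k) (\<lambda>h k. k + h)))"
proof -
  have m1: "strict_mono_on (FareyB_left n m) (frac_map (\<lambda>h k. h) (\<lambda>h k. k - h))"
    by (rule smono_gen[OF mem_L]) (auto simp: algebra_simps)
  have m2: "strict_mono_on (FareyF (n - m) m) (frac_map (\<lambda>h k. h) (\<lambda>h k. k + h))"
    by (rule smono_gen[OF mem_F]) (auto simp: algebra_simps)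
  have m3: "strict_mono_on (FareyB_right n m) (frac_map (\<lambda>h k. 2*h - k) (\<lambda>h k. h))"
    by (rule smono_gen[OF mem_R]) (auto simp: algebra_simps)
  have m4: "strict_mono_on (FareyG m (2*m - n)) (frac_map (\<lambda>h k. k) (\<lambda>h k. 2*k - h))"
    by (rule smono_gen[OF mem_G]) (auto simp: algebra_simps)
  have m5: "order_reversing_on (FareyB_left n m) (frac_map (\<lambda>h k. k - 2*h) (\<lambda>h k. k - h))"
    by (rule rev_gen[OF mem_L]) (auto simp: algebra_simps)
  have m6: "order_reversing_on (FareyG (n - m) (n - 2*m)) (frac_map (\<lambda>h k. k - h) (\<lambda>h k. 2*k - h))"
    by (rule rev_gen[OF mem_G]) (auto simp: algebra_simps)
  have m7: "order_reversing_on (FareyB_right n m) (frac_map (\<lambda>h k. k - h) (\<lambda>h k. h))"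
    by (rule rev_gen[OF mem_R]) (auto simp: algebra_simps)
  have m8: "order_reversing_on (FareyF m (n - m)) (frac_map (\<lambda>h k. k) (\<lambda>h k. k + h))"
    by (rule rev_gen[OF mem_F]) (auto simp: algebra_simps)
  show ?thesis using b1 b2 b3 b4 b5 b6 b7 b8 m1 m2 m3 m4 m5 m6 m7 m8 by blast
qed

end
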